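(* Let $A\in\mathcal{PM}(n)$ have row vectors $r_0,\ldots,r_{n-1}$. A poset vector $v$ of $A$ is join-irreducible if and only if $v=r_i$ for some $i\in X_n$.
   Context: Let $X_n=\{0,1,\ldots,n-1\}$. A naturally labeled (NL) poset on $X_n$ is a partial order $\preceq$ on $X_n$ such that $x\preceq y$ implies $x\le y$ in the usual integer order. Its poset matrix is the $n\times n$ $(0,1)$-matrix $A=(a_{i,j})_{i,j\in X_n}$ with $a_{i,j}=1$ if $j\preceq i$ and $0$ otherwise; $\mathcal{PM}(n)$ is the set of all such matrices. Arithmetic is Boolean ($1+1=1$, vector sum entrywise). For $v\in\{0,1\}^n$, $A^v=\begin{bmatrix}A&\mathbf{0}\\ v&1\end{bmatrix}$, and $v$ is a poset vector of $A$ if $A^v\in\mathcal{PM}(n+1)$. A poset vector $v$ is join-irreducible if $v\neq\mathbf 0$ and, whenever $v=u+w$ with $u,w$ poset vectors of $A$, one has $v=u$ or $v=w$. *)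

theory Defs
  imports Main
begin

text \<open>An n x n (0,1)-matrix is represented as a function A :: nat => nat => bool,
  where only the entries A i j with i, j < n are relevant (A i j = True means a_{i,j} = 1).\<close>

text \<open>Poset matrix of an NL poset on X_n: a_{i,j} = 1 iff j precedes-or-equals i.
  The relation is reflexive, antisymmetric, transitive, and natural (j \<preceq> i implies j \<le> i).\<close>
definition is_PM :: "nat \<Rightarrow> (nat \<Rightarrow> nat \<Rightarrow> bool) \<Rightarrow> bool" where
  "is_PM n A \<longleftrightarrow>
     (\<forall>i<n. A i i) \<and>
     (\<forall>i<n. \<forall>j<n. A i j \<and> A j i \<longrightarrow> i = j) \<and>
     (\<forall>i<n. \<forall>j<n. \<forall>k<n. A i j \<and> A j k \<longrightarrow> A i k) \<and>
     (\<forall>i<n. \<forall>j<n. A i j \<longrightarrow> j \<le> i)"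

definition ext_mat :: "nat \<Rightarrow> (nat \<Rightarrow> nat \<Rightarrow> bool) \<Rightarrow> bool list \<Rightarrow> nat \<Rightarrow> nat \<Rightarrow> bool" where
  "ext_mat n A v i j =
     (if i < n \<and> j < n then A i j
      else if i = n \<and> j < n then v ! j
      else i = n \<and> j = n)"

definition poset_vec :: "nat \<Rightarrow> (nat \<Rightarrow> nat \<Rightarrow> bool) \<Rightarrow> bool list \<Rightarrow> bool" where
  "poset_vec n A v \<longleftrightarrow> length v = n \<and> is_PM (Suc n) (ext_mat n A v)"

definition vsum :: "bool list \<Rightarrow> bool list \<Rightarrow> bool list" where
  "vsum u w = map2 (\<or>) u w"

definition join_irreducible :: "nat \<Rightarrow> (nat \<Rightarrow> nat \<Rightarrow> bool) \<Rightarrow> bool list \<Rightarrow> bool" where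
  "join_irreducible n A v \<longleftrightarrow>
     v \<noteq> replicate n False \<and>
     (\<forall>u w. poset_vec n A u \<longrightarrow> poset_vec n A w \<longrightarrow> v = vsum u w \<longrightarrow> v = u \<or> v = w)"

definition row :: "nat \<Rightarrow> (nat \<Rightarrow> nat \<Rightarrow> bool) \<Rightarrow> nat \<Rightarrow> bool list" where
  "row n A i = map (\<lambda>j. A i j) [0..<n]"

end

theory Submission
  imports Defs
begin

lemma ext1: "i < n \<Longrightarrow> j < n \<Longrightarrow> ext_mat n A v i j = A i j"
  by (simp add: ext_mat_def)
lemma ext2: "j < n \<Longrightarrow> ext_mat n A v n j = v ! j"
  by (simp add: ext_mat_def)
lemma ext3: "ext_mat n A v i n = (i = n)"
  by (simp add: ext_mat_def)

lemma pv_iff: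
  assumes "is_PM n A"
  shows "poset_vec n A v \<longleftrightarrow> length v = n \<and> (\<forall>j<n. \<forall>k<n. v!j \<and> A j k \<longrightarrow> v!k)"
proof
  assume "poset_vec n A v"
  then have L: "length v = n" and P: "is_PM (Suc n) (ext_mat n A v)" by (auto simp: poset_vec_def)
  show "length v = n \<and> (\<forall>j<n. \<forall>k<n. v!j \<and> A j k \<longrightarrow> v!k)"
  proof (intro conjI allI impI L)
    fix j k assume "j < n" "k < n" "v!j \<and> A j k"
    then have "ext_mat n A v n j" "ext_mat n A v j k" using ext1 ext2 by auto
    moreover have "\<forall>a<Suc n. \<forall>b<Suc n. \<forall>c<Suc n. ext_mat n A v a b \<and> ext_mat n A v b c \<longrightarrow> ext_mat n A v a c"
      using P unfolding is_PM_def by blast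
    ultimately have "ext_mat n A v n k" using \<open>j<n\<close> \<open>k<n\<close> by (meson lessI less_SucI)
    then show "v!k" using \<open>k<n\<close> ext2 by simp
  qed
next
  assume H: "length v = n \<and> (\<forall>j<n. \<forall>k<n. v!j \<and> A j k \<longrightarrow> v!k)"
  have r: "\<forall>i<Suc n. ext_mat n A v i i"
  proof (intro allI impI)
    fix i assume "i < Suc n" then show "ext_mat n A v i i"
    proof -
      have "\<forall>a<n. A a a" using assms unfolding is_PM_def by blast
      then show ?thesis using \<open>i < Suc n\<close> by (cases "i < n") (auto simp: ext_mat_def)
    qed
  qed
  have an: "\<forall>i<Suc n. \<forall>j<Suc n. ext_mat n A v i j \<and> ext_mat n A v j i \<longrightarrow> i = j"
  proof (intro allI impI)
    fix i j assume "i < Suc n" "j < Suc n" "ext_mat n A v i j \<and> ext_mat n A v j i"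
    note h = this
    have as: "\<forall>a<n. \<forall>b<n. A a b \<and> A b a \<longrightarrow> a = b"
      using assms unfolding is_PM_def by blast
    show "i = j"
    proof (cases "i < n \<and> j < n")
      case True
      then have "A i j" "A j i" using h by (simp_all add: ext_mat_def)
      then show ?thesis using as True by blast
    next
      case False
      then have "i = n \<or> j = n" using h(1,2) by linarith
      then show ?thesis using h(1,2,3) ext3[of n A v i] ext3[of n A v j] by (metis)
    qed
  qed
  have nt: "\<forall>i<Suc n. \<forall>j<Suc n. ext_mat n A v i j \<longrightarrow> j \<le> i"
  proof (intro allI impI)
    fix i j assume "i < Suc n" "j < Suc n" "ext_mat n A v i j"
    note h = this
    have as: "\<forall>a<n. \<forall>b<n. A a b \<longrightarrow> b \<le> a"
      using assms unfolding is_PM_def by blast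
    show "j \<le> i"
    proof (cases "i < n \<and> j < n")
      case True
      then have "A i j" using h by (simp add: ext_mat_def)
      then show ?thesis using as True by blast
    next
      case False
      then have "i = n \<or> j = n" using h(1,2) by linarith
      then show ?thesis using h(1,2,3) ext3[of n A v i] ext3[of n A v j] by (metis less_Suc_eq_le order_refl)
    qed
  qed
  have tr: "\<forall>i<Suc n. \<forall>j<Suc n. \<forall>k<Suc n. ext_mat n A v i j \<and> ext_mat n A v j k \<longrightarrow> ext_mat n A v i k"
  proof (intro allI impI)
    fix i j k assume ijk: "i < Suc n" "j < Suc n" "k < Suc n" "ext_mat n A v i j \<and> ext_mat n A v j k"
    show "ext_mat n A v i k"
    proof (cases "i < n")
      case True
      have "j \<noteq> n" using ijk(4) True ext3[of n A v i] by auto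
      then have "j < n" using ijk(2) by linarith
      have "k \<noteq> n" using ijk(4) \<open>j < n\<close> ext3[of n A v j] by auto
      then have "k < n" using ijk(3) by linarith
      have "A i j" "A j k" using ijk(4) True \<open>j<n\<close> \<open>k<n\<close> ext1 by auto
      then have "A i k" using assms True \<open>j<n\<close> \<open>k<n\<close> unfolding is_PM_def by blast
      then show ?thesis using True \<open>k<n\<close> ext1 by simp
    next
      case False
      then have "i = n" using ijk(1) by linarith
      show ?thesis
      proof (cases "j < n")
        case True
        have vj: "v ! j" using ijk(4) \<open>i = n\<close> True ext2[of j n A v] by simp
        show ?thesis
        proof (cases "k < n")
          case k: True
          have "A j k" using ijk(4) True k ext1[of j n k A v] by simp
          then have "v ! k" using H vj True k by blast
          then show ?thesis using \<open>i = n\<close> k ext2[of k n A v] by simp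
        next
          case False
          then have "k = n" using ijk(3) by linarith
          then show ?thesis using \<open>i = n\<close> ext3 by simp
        qed
      next
        case False
        then have "j = n" using ijk(2) by linarith
        then show ?thesis using ijk(4) \<open>i = n\<close> by simp
      qed
    qed
  qed
  have L: "length v = n" using H by simp
  show "poset_vec n A v" unfolding poset_vec_def is_PM_def
    by (rule conjI[OF L conjI[OF r conjI[OF an conjI[OF tr nt]]]])
qed

lemma row_pv:
  assumes "is_PM n A" "i < n"
  shows "poset_vec n A (row n A i)"
proof -
  have tr: "\<forall>j<n. \<forall>k<n. A i j \<and> A j k \<longrightarrow> A i k"
    using assms unfolding is_PM_def by blast
  have D: "\<forall>j<n. \<forall>k<n. map (A i) [0..<n] ! j \<and> A j k \<longrightarrow> map (A i) [0..<n] ! k"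
  proof (intro allI impI)
    fix j k assume jk: "j < n" "k < n" "map (A i) [0..<n] ! j \<and> A j k"
    have e: "\<And>m. m < n \<Longrightarrow> map (A i) [0..<n] ! m = A i m" by simp
    show "map (A i) [0..<n] ! k" using jk tr e[OF jk(1)] e[OF jk(2)] by blast
  qed
  have L: "length (map (A i) [0..<n]) = n" by simp
  show ?thesis unfolding pv_iff[OF assms(1)] row_def using conjI[OF L D] .
qed

theorem theorem5p5:
  fixes n :: nat and A :: "nat \<Rightarrow> nat \<Rightarrow> bool" and v :: "bool list"
  assumes "is_PM n A"
    and "poset_vec n A v"
  shows "join_irreducible n A v \<longleftrightarrow> (\<exists>i<n. v = row n A i)"
proof
  have L: "length v = n" and D: "\<And>j k. j<n \<Longrightarrow> k<n \<Longrightarrow> v!j \<Longrightarrow> A j k \<Longrightarrow> v!k"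
    using assms(2) unfolding pv_iff[OF assms(1)] by blast+
  assume J: "join_irreducible n A v"
  then have "v \<noteq> replicate n False" by (simp add: join_irreducible_def)
  then obtain j where j: "j < n" "v!j" using L
    by (metis in_set_conv_nth replicate_eqI)
  define i where "i = Max {j. j < n \<and> v!j}"
  have fin: "finite {j. j < n \<and> v!j}" by simp
  have ne: "{j. j < n \<and> v!j} \<noteq> {}" using j by blast
  have i: "i < n" "v!i" using Max_in[OF fin ne] unfolding i_def by blast+
  have imax: "\<And>k. k < n \<Longrightarrow> v!k \<Longrightarrow> k \<le> i" unfolding i_def using fin by (simp add: Max_ge)
  define w where "w = v[i := False]"
  have Lw: "length w = n" using L by (simp add: w_def)
  have wpv: "poset_vec n A w"
    unfolding pv_iff[OF assms(1)]
  proof (intro conjI allI impI Lw)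
    fix a b assume ab: "a < n" "b < n" "w!a \<and> A a b"
    have wa: "w!a = (if a = i then False else v!a)" using L ab(1) by (simp add: w_def nth_list_update)
    then have va: "v!a" "a \<noteq> i" using ab(3) by (auto split: if_splits)
    have "v!b" using D ab va by blast
    moreover have "b \<noteq> i"
    proof
      assume "b = i"
      then have "i \<le> a" using assms(1) ab unfolding is_PM_def by blast
      moreover have "a \<le> i" using imax ab va by auto
      ultimately show False using va by simp
    qed
    ultimately show "w!b" using L by (simp add: w_def)
  qed
  have Aii0: "A i i" using assms(1) i(1) unfolding is_PM_def by blast
  have rpv: "poset_vec n A (row n A i)" using row_pv[OF assms(1) i(1)] .
  have "v = vsum (row n A i) w"
  proof (rule nth_equalityI)
    show "length v = length (vsum (row n A i) w)" using L Lw by (simp add: vsum_def row_def)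
    fix k assume "k < length v"
    then show "v ! k = vsum (row n A i) w ! k" using L Lw D[of i k] i Aii0
      by (auto simp: vsum_def row_def w_def nth_list_update)
  qed
  then have "v = row n A i \<or> v = w" using J rpv wpv unfolding join_irreducible_def by blast
  moreover have "v \<noteq> w" using i L by (metis length_list_update nth_list_update_eq w_def)
  ultimately show "\<exists>i<n. v = row n A i" using i by blast
next
  assume "\<exists>i<n. v = row n A i"
  then obtain i where i: "i < n" and v: "v = row n A i" by blast
  have Aii: "A i i" using assms(1) i unfolding is_PM_def by blast
  show "join_irreducible n A v"
    unfolding join_irreducible_def
  proof (intro conjI allI impI)
    show "v \<noteq> replicate n False" using v i Aii
      by (metis add_0 diff_zero length_map length_upt nth_map nth_replicate nth_upt row_def)
    fix u w assume u: "poset_vec n A u" and w: "poset_vec n A w" and s: "v = vsum u w"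
    have Lu: "length u = n" and Du: "\<And>j k. j<n \<Longrightarrow> k<n \<Longrightarrow> u!j \<Longrightarrow> A j k \<Longrightarrow> u!k"
      using u unfolding pv_iff[OF assms(1)] by blast+
    have Lw: "length w = n" and Dw: "\<And>j k. j<n \<Longrightarrow> k<n \<Longrightarrow> w!j \<Longrightarrow> A j k \<Longrightarrow> w!k"
      using w unfolding pv_iff[OF assms(1)] by blast+
    have sk: "\<And>k. k < n \<Longrightarrow> A i k = (u!k \<or> w!k)"
      using s v Lu Lw by (metis (no_types, lifting) add_0 diff_zero length_map length_upt nth_map nth_upt nth_zip row_def vsum_def case_prod_conv length_zip min.idem)
    have "u!i \<or> w!i" using sk[OF i] Aii by simp
    then show "v = u \<or> v = w"
    proof
      assume "u!i"
      have "v = u"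
        by (rule nth_equalityI) (use v Lu sk Du[OF i _ \<open>u!i\<close>] in \<open>auto simp: row_def\<close>)
      then show ?thesis ..
    next
      assume "w!i"
      have "v = w"
        by (rule nth_equalityI) (use v Lw sk Dw[OF i _ \<open>w!i\<close>] in \<open>auto simp: row_def\<close>)
      then show ?thesis ..
    qed
  qed
qed

end
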